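(* Let $X,Y$ be continuous random variables and $\mathcal{B}$ a natural correlation basis. Then: (i) if $(X,Y)$ is h-symmetric, $\rho^B_{jk}(X,Y)=0$ for $k$ odd; (ii) if $(X,Y)$ is v-symmetric, $\rho^B_{jk}(X,Y)=0$ for $j$ odd; (iii) if $(X,Y)$ is radially symmetric, $\rho^B_{jk}(X,Y)=0$ for $j+k$ odd; (iv) if $(X,Y)$ is jointly symmetric, $\rho^B_{jk}(X,Y)=0$ for $j$ odd or $k$ odd.
   Context: A correlation basis is a complete orthonormal system $\{B_j:j\in\mathbb{N}_0\}$ of $\mathcal{L}^2([0,1])$ with $B_0\equiv1$. It is natural if each $B_j$, $j\ge1$, is continuous on $[0,1]$, continuously differentiable on $(0,1)$ with bounded derivative vanishing exactly at its turning points, piecewise strictly monotonic on a finite partition, and satisfies: $B_j'>0$ on some $(1-\epsilon_j,1)$; $B_j$ has exactly $j-1$ turning points; $B_j(1-u)=(-1)^jB_j(u)$. Basis correlation: $\rho^B_{jk}(X,Y)=\rho(B_j(F_X(X)),B_k(F_Y(Y)))$. A random vector $(X,Y)$ is h-symmetric if $(X,Y-a)\stackrel{d}{=}(X,a-Y)$ for some $a\in\mathbb{R}$; v-symmetric if $(X-b,Y)\stackrel{d}{=}(b-X,Y)$ for some $b\in\mathbb{R}$; radially symmetric if $(X-b,Y-a)\stackrel{d}{=}(b-X,a-Y)$ for some $a,b\in\mathbb{R}$; jointly symmetric if it is both h-symmetric and v-symmetric. *)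

theory Defs
  imports "HOL-Probability.Probability"
begin

abbreviation unit_leb :: "real measure" where
  "unit_leb \<equiv> lebesgue_on {0..1}"

definition in_L2_unit :: "(real \<Rightarrow> real) \<Rightarrow> bool" where
  "in_L2_unit f \<longleftrightarrow> f \<in> borel_measurable unit_leb \<and> integrable unit_leb (\<lambda>x. (f x)\<^sup>2)"

definition L2_inner_unit :: "(real \<Rightarrow> real) \<Rightarrow> (real \<Rightarrow> real) \<Rightarrow> real" where
  "L2_inner_unit f g = (LINT x|unit_leb. f x * g x)"

definition complete_orthonormal_system :: "(nat \<Rightarrow> real \<Rightarrow> real) \<Rightarrow> bool" where
  "complete_orthonormal_system B \<longleftrightarrow>
     (\<forall>j. in_L2_unit (B j)) \<and>
     (\<forall>j k. L2_inner_unit (B j) (B k) = (if j = k then 1 else 0)) \<and>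
     (\<forall>f. in_L2_unit f \<and> (\<forall>j. L2_inner_unit f (B j) = 0) \<longrightarrow> (AE x in unit_leb. f x = 0))"

definition correlation_basis :: "(nat \<Rightarrow> real \<Rightarrow> real) \<Rightarrow> bool" where
  "correlation_basis B \<longleftrightarrow> complete_orthonormal_system B \<and> (\<forall>u\<in>{0..1}. B 0 u = 1)"

text \<open>A turning point of f is an interior point of (0,1) where f has a strict local
  extremum (i.e. where f changes its direction of monotonicity).\<close>
definition turning_point :: "(real \<Rightarrow> real) \<Rightarrow> real \<Rightarrow> bool" where
  "turning_point f u \<longleftrightarrow> u \<in> {0<..<1} \<and>
     (\<exists>e>0. (\<forall>v. 0 < \<bar>v - u\<bar> \<and> \<bar>v - u\<bar> < e \<longrightarrow> f v < f u) \<or>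
            (\<forall>v. 0 < \<bar>v - u\<bar> \<and> \<bar>v - u\<bar> < e \<longrightarrow> f v > f u))"

definition piecewise_strictly_monotonic :: "(real \<Rightarrow> real) \<Rightarrow> bool" where
  "piecewise_strictly_monotonic f \<longleftrightarrow>
     (\<exists>(t :: nat \<Rightarrow> real) m. t 0 = 0 \<and> t m = 1 \<and>
        (\<forall>i<m. t i < t (Suc i) \<and>
           (strict_mono_on {t i..t (Suc i)} f \<or> monotone_on {t i..t (Suc i)} (<) (>) f)))"

definition natural_basis_function :: "nat \<Rightarrow> (real \<Rightarrow> real) \<Rightarrow> bool" where
  "natural_basis_function j b \<longleftrightarrow>
     continuous_on {0..1} b \<and>
     (\<exists>b'. (\<forall>u\<in>{0<..<1}. (b has_real_derivative b' u) (at u)) \<and>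
           continuous_on {0<..<1} b' \<and>
           bounded (b' ` {0<..<1}) \<and>
           (\<forall>u\<in>{0<..<1}. b' u = 0 \<longleftrightarrow> turning_point b u) \<and>
           (\<exists>\<epsilon>>0. \<forall>u\<in>{1 - \<epsilon><..<1}. b' u > 0)) \<and>
     piecewise_strictly_monotonic b \<and>
     finite {u. turning_point b u} \<and> card {u. turning_point b u} = j - 1 \<and>
     (\<forall>u\<in>{0..1}. b (1 - u) = (-1) ^ j * b u)"

definition natural_correlation_basis :: "(nat \<Rightarrow> real \<Rightarrow> real) \<Rightarrow> bool" where
  "natural_correlation_basis B \<longleftrightarrow>
     correlation_basis B \<and> (\<forall>j\<ge>1. natural_basis_function j (B j))"

definition distr_fun :: "'a measure \<Rightarrow> ('a \<Rightarrow> real) \<Rightarrow> real \<Rightarrow> real" where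
  "distr_fun M X = cdf (distr M borel X)"

definition continuous_rv :: "'a measure \<Rightarrow> ('a \<Rightarrow> real) \<Rightarrow> bool" where
  "continuous_rv M X \<longleftrightarrow> X \<in> borel_measurable M \<and> (\<forall>x. isCont (distr_fun M X) x)"

definition rv_mean :: "'a measure \<Rightarrow> ('a \<Rightarrow> real) \<Rightarrow> real" where
  "rv_mean M U = (LINT \<omega>|M. U \<omega>)"

definition rv_cov :: "'a measure \<Rightarrow> ('a \<Rightarrow> real) \<Rightarrow> ('a \<Rightarrow> real) \<Rightarrow> real" where
  "rv_cov M U V = (LINT \<omega>|M. (U \<omega> - rv_mean M U) * (V \<omega> - rv_mean M V))"

text \<open>Pearson correlation (with Isabelle's convention x / 0 = 0 in degenerate cases).\<close>
definition rv_corr :: "'a measure \<Rightarrow> ('a \<Rightarrow> real) \<Rightarrow> ('a \<Rightarrow> real) \<Rightarrow> real" where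
  "rv_corr M U V = rv_cov M U V / sqrt (rv_cov M U U * rv_cov M V V)"

definition basis_corr :: "(nat \<Rightarrow> real \<Rightarrow> real) \<Rightarrow> nat \<Rightarrow> nat \<Rightarrow> 'a measure \<Rightarrow>
    ('a \<Rightarrow> real) \<Rightarrow> ('a \<Rightarrow> real) \<Rightarrow> real" where
  "basis_corr B j k M X Y =
     rv_corr M (\<lambda>\<omega>. B j (distr_fun M X (X \<omega>))) (\<lambda>\<omega>. B k (distr_fun M Y (Y \<omega>)))"

definition h_symmetric :: "'a measure \<Rightarrow> ('a \<Rightarrow> real) \<Rightarrow> ('a \<Rightarrow> real) \<Rightarrow> bool" where
  "h_symmetric M X Y \<longleftrightarrow> (\<exists>a::real.
     distr M borel (\<lambda>\<omega>. (X \<omega>, Y \<omega> - a)) = distr M borel (\<lambda>\<omega>. (X \<omega>, a - Y \<omega>)))"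

definition v_symmetric :: "'a measure \<Rightarrow> ('a \<Rightarrow> real) \<Rightarrow> ('a \<Rightarrow> real) \<Rightarrow> bool" where
  "v_symmetric M X Y \<longleftrightarrow> (\<exists>b::real.
     distr M borel (\<lambda>\<omega>. (X \<omega> - b, Y \<omega>)) = distr M borel (\<lambda>\<omega>. (b - X \<omega>, Y \<omega>)))"

definition radially_symmetric :: "'a measure \<Rightarrow> ('a \<Rightarrow> real) \<Rightarrow> ('a \<Rightarrow> real) \<Rightarrow> bool" where
  "radially_symmetric M X Y \<longleftrightarrow> (\<exists>a b::real.
     distr M borel (\<lambda>\<omega>. (X \<omega> - b, Y \<omega> - a)) = distr M borel (\<lambda>\<omega>. (b - X \<omega>, a - Y \<omega>)))"

definition jointly_symmetric :: "'a measure \<Rightarrow> ('a \<Rightarrow> real) \<Rightarrow> ('a \<Rightarrow> real) \<Rightarrow> bool" where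
  "jointly_symmetric M X Y \<longleftrightarrow> h_symmetric M X Y \<and> v_symmetric M X Y"

end

theory Submission imports Defs begin

lemma int_distr_eq:
  fixes f1 f2 :: "'a \<Rightarrow> 'b::topological_space" and g :: "'b \<Rightarrow> real"
  assumes "f1 \<in> borel_measurable M" "f2 \<in> borel_measurable M"
    and "distr M borel f1 = distr M borel f2" and "g \<in> borel_measurable borel"
  shows "(\<integral>\<omega>. g (f1 \<omega>) \<partial>M) = (\<integral>\<omega>. g (f2 \<omega>) \<partial>M)"
proof -
  have "(\<integral>\<omega>. g (f1 \<omega>) \<partial>M) = integral\<^sup>L (distr M borel f1) g"
    by (rule integral_distr[symmetric]) (use assms in auto)
  also have "\<dots> = integral\<^sup>L (distr M borel f2) g" using assms(3) by simp
  also have "\<dots> = (\<integral>\<omega>. g (f2 \<omega>) \<partial>M)"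
    by (rule integral_distr) (use assms in auto)
  finally show ?thesis .
qed

lemma cdf_refl:
  fixes \<mu> :: "real measure"
  assumes "real_distribution \<mu>" "\<And>x. isCont (cdf \<mu>) x"
    and "\<And>h::real\<Rightarrow>real. h \<in> borel_measurable borel \<Longrightarrow> integral\<^sup>L \<mu> h = (\<integral>x. h (2*a - x) \<partial>\<mu>)"
  shows "cdf \<mu> t = 1 - cdf \<mu> (2*a - t)"
proof -
  interpret real_distribution \<mu> by fact
  have "cdf \<mu> t = integral\<^sup>L \<mu> (indicator {..t})"
    by (simp add: cdf_def)
  also have "\<dots> = (\<integral>x. indicator {..t} (2*a - x) \<partial>\<mu>)"
    using assms(3)[of "indicator {..t}"] by simp
  also have "(\<lambda>x. indicator {..t} (2*a - x) :: real) = indicator {2*a-t..}"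
    by (auto simp: indicator_def fun_eq_iff)
  also have "integral\<^sup>L \<mu> (indicator {2*a-t..}) = measure \<mu> {2*a-t..}"
    by simp
  also have "{2*a-t..} = space \<mu> - {..<2*a-t}" by auto
  also have "measure \<mu> (space \<mu> - {..<2*a-t}) = 1 - measure \<mu> {..<2*a-t}"
    by (rule prob_compl) simp
  also have "measure \<mu> {..<2*a-t} = cdf \<mu> (2*a - t)"
  proof -
    have "{..2*a-t} = {..<2*a-t} \<union> {2*a-t}" by auto
    then have "cdf \<mu> (2*a - t) = measure \<mu> ({..<2*a-t} \<union> {2*a-t})"
      by (simp only: cdf_def)
    also have "\<dots> = measure \<mu> {..<2*a-t} + measure \<mu> {2*a-t}"
      by (rule finite_measure_Union) auto
    finally have "cdf \<mu> (2*a - t) = measure \<mu> {..<2*a-t} + measure \<mu> {2*a-t}" .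
    moreover have "measure \<mu> {2*a-t} = 0" using assms(2) isCont_cdf by blast
    ultimately show ?thesis by simp
  qed
  finally show ?thesis .
qed

lemma core:
  fixes X Y :: "'a \<Rightarrow> real" and f g gX gY :: "real \<Rightarrow> real" and ea ec :: real
  assumes e: "ea = 1 \<or> ea = -1" "ec = 1 \<or> ec = -1" "ea * ec = -1"
    and H: "\<And>h::real\<times>real\<Rightarrow>real. h \<in> borel_measurable borel \<Longrightarrow>
          (\<integral>\<omega>. h (X \<omega>, Y \<omega>) \<partial>M) = (\<integral>\<omega>. h (gX (X \<omega>), gY (Y \<omega>)) \<partial>M)"
    and fx: "\<And>x. f (gX x) = ea * f x" and gy: "\<And>y. g (gY y) = ec * g y"
    and fm: "f \<in> borel_measurable borel" and gm: "g \<in> borel_measurable borel"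
  shows "rv_corr M (\<lambda>\<omega>. f (X \<omega>)) (\<lambda>\<omega>. g (Y \<omega>)) = 0"
proof -
  define mA where "mA = rv_mean M (\<lambda>\<omega>. f (X \<omega>))"
  define mC where "mC = rv_mean M (\<lambda>\<omega>. g (Y \<omega>))"
  have "mA = (\<integral>\<omega>. (\<lambda>p. f (fst p)) (X \<omega>, Y \<omega>) \<partial>M)" by (simp add: mA_def rv_mean_def)
  also have "\<dots> = (\<integral>\<omega>. (\<lambda>p. f (fst p)) (gX (X \<omega>), gY (Y \<omega>)) \<partial>M)"
    by (rule H) (subst borel_prod[symmetric], use fm in measurable)
  also have "\<dots> = ea * mA" by (simp add: fx mA_def rv_mean_def)
  finally have mA: "ea * mA = mA" by simp
  have "mC = (\<integral>\<omega>. (\<lambda>p. g (snd p)) (X \<omega>, Y \<omega>) \<partial>M)" by (simp add: mC_def rv_mean_def)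
  also have "\<dots> = (\<integral>\<omega>. (\<lambda>p. g (snd p)) (gX (X \<omega>), gY (Y \<omega>)) \<partial>M)"
    by (rule H) (subst borel_prod[symmetric], use gm in measurable)
  also have "\<dots> = ec * mC" by (simp add: gy mC_def rv_mean_def)
  finally have mC: "ec * mC = mC" by simp
  define cv where "cv = rv_cov M (\<lambda>\<omega>. f (X \<omega>)) (\<lambda>\<omega>. g (Y \<omega>))"
  have "cv = (\<integral>\<omega>. (\<lambda>p. (f (fst p) - mA) * (g (snd p) - mC)) (X \<omega>, Y \<omega>) \<partial>M)"
    by (simp add: cv_def rv_cov_def mA_def mC_def)
  also have "\<dots> = (\<integral>\<omega>. (\<lambda>p. (f (fst p) - mA) * (g (snd p) - mC)) (gX (X \<omega>), gY (Y \<omega>)) \<partial>M)"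
    by (rule H) (subst borel_prod[symmetric], use fm gm in measurable)
  also have "\<dots> = (\<integral>\<omega>. ((f (X \<omega>) - mA) * (g (Y \<omega>) - mC)) * (ea * ec) \<partial>M)"
  proof -
    have "(ea * f x - mA) * (ec * g y - mC) = ((f x - mA) * (g y - mC)) * (ea * ec)" for x y
    proof -
      have "(ea * f x - mA) * (ec * g y - mC) = (ea * f x - ea * mA) * (ec * g y - ec * mC)"
        by (simp only: mA mC)
      then show ?thesis by (simp add: algebra_simps)
    qed
    then show ?thesis by (simp add: fx gy)
  qed
  also have "\<dots> = - cv" using e(3) by (simp add: cv_def rv_cov_def mA_def mC_def)
  finally have "cv = 0" by simp
  then show ?thesis by (simp add: rv_corr_def cv_def)
qed

lemma meas_shift:
  fixes h :: "real\<times>real \<Rightarrow> real"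
  assumes "h \<in> borel_measurable borel"
  shows "(\<lambda>p. h (fst p + b, snd p + a)) \<in> borel_measurable borel"
proof -
  have "(\<lambda>p::real\<times>real. (fst p + b, snd p + a)) \<in> borel_measurable borel"
    by (intro borel_measurable_continuous_onI continuous_intros)
  from measurable_comp[OF this assms] show ?thesis by (simp add: comp_def)
qed

lemma H_h:
  fixes X Y :: "'a \<Rightarrow> real" and h :: "real\<times>real \<Rightarrow> real"
  assumes "X \<in> borel_measurable M" "Y \<in> borel_measurable M"
    and "distr M borel (\<lambda>\<omega>. (X \<omega>, Y \<omega> - a)) = distr M borel (\<lambda>\<omega>. (X \<omega>, a - Y \<omega>))"
    and "h \<in> borel_measurable borel"
  shows "(\<integral>\<omega>. h (X \<omega>, Y \<omega>) \<partial>M) = (\<integral>\<omega>. h (X \<omega>, 2*a - Y \<omega>) \<partial>M)"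
  using int_distr_eq[OF _ _ assms(3) meas_shift[OF assms(4), of 0 a]] assms(1,2)
  by (simp add: algebra_simps)

lemma H_v:
  fixes X Y :: "'a \<Rightarrow> real" and h :: "real\<times>real \<Rightarrow> real"
  assumes "X \<in> borel_measurable M" "Y \<in> borel_measurable M"
    and "distr M borel (\<lambda>\<omega>. (X \<omega> - b, Y \<omega>)) = distr M borel (\<lambda>\<omega>. (b - X \<omega>, Y \<omega>))"
    and "h \<in> borel_measurable borel"
  shows "(\<integral>\<omega>. h (X \<omega>, Y \<omega>) \<partial>M) = (\<integral>\<omega>. h (2*b - X \<omega>, Y \<omega>) \<partial>M)"
  using int_distr_eq[OF _ _ assms(3) meas_shift[OF assms(4), of b 0]] assms(1,2)
  by (simp add: algebra_simps)

lemma H_r: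
  fixes X Y :: "'a \<Rightarrow> real" and h :: "real\<times>real \<Rightarrow> real"
  assumes "X \<in> borel_measurable M" "Y \<in> borel_measurable M"
    and "distr M borel (\<lambda>\<omega>. (X \<omega> - b, Y \<omega> - a)) = distr M borel (\<lambda>\<omega>. (b - X \<omega>, a - Y \<omega>))"
    and "h \<in> borel_measurable borel"
  shows "(\<integral>\<omega>. h (X \<omega>, Y \<omega>) \<partial>M) = (\<integral>\<omega>. h (2*b - X \<omega>, 2*a - Y \<omega>) \<partial>M)"
  using int_distr_eq[OF _ _ assms(3) meas_shift[OF assms(4), of b a]] assms(1,2)
  by (simp add: algebra_simps)

lemma marg_cdf:
  fixes Z :: "'a \<Rightarrow> real"
  assumes P: "prob_space M" and Zc: "continuous_rv M Z"
    and H: "\<And>h::real\<Rightarrow>real. h \<in> borel_measurable borel \<Longrightarrow>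
       (\<integral>\<omega>. h (Z \<omega>) \<partial>M) = (\<integral>\<omega>. h (2*c - Z \<omega>) \<partial>M)"
  shows "distr_fun M Z (2*c - y) = 1 - distr_fun M Z y"
proof -
  interpret prob_space M by fact
  have Zm: "Z \<in> borel_measurable M" using Zc by (simp add: continuous_rv_def)
  have rd: "real_distribution (distr M borel Z)" using Zm by simp
  have "cdf (distr M borel Z) (2*c - y) = 1 - cdf (distr M borel Z) (2*c - (2*c - y))"
  proof (rule cdf_refl[OF rd])
    show "isCont (cdf (distr M borel Z)) x" for x
      using Zc by (simp add: continuous_rv_def distr_fun_def)
    fix h :: "real \<Rightarrow> real" assume hm: "h \<in> borel_measurable borel"
    have "integral\<^sup>L (distr M borel Z) h = (\<integral>\<omega>. h (Z \<omega>) \<partial>M)"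
      by (rule integral_distr) (use Zm hm in auto)
    also have "\<dots> = (\<integral>\<omega>. h (2*c - Z \<omega>) \<partial>M)" by (rule H[OF hm])
    also have "\<dots> = (\<integral>x. h (2*c - x) \<partial>distr M borel Z)"
      by (rule integral_distr[symmetric]) (use Zm hm in measurable)
    finally show "integral\<^sup>L (distr M borel Z) h = (\<integral>x. h (2*c - x) \<partial>distr M borel Z)" .
  qed
  then show ?thesis by (simp add: distr_fun_def)
qed

lemma basis_comp:
  fixes Z :: "'a \<Rightarrow> real"
  assumes P: "prob_space M" and Zc: "continuous_rv M Z"
    and B: "natural_correlation_basis B" and j: "j \<ge> 1"
  shows "(\<lambda>x. B j (distr_fun M Z x)) \<in> borel_measurable borel"
    and "\<And>c y. distr_fun M Z (2*c - y) = 1 - distr_fun M Z y \<Longrightarrow>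
           B j (distr_fun M Z (2*c - y)) = (-1)^j * B j (distr_fun M Z y)"
proof -
  interpret prob_space M by fact
  have Zm: "Z \<in> borel_measurable M" using Zc by (simp add: continuous_rv_def)
  interpret rd: real_distribution "distr M borel Z" using Zm by simp
  have nb: "natural_basis_function j (B j)" using B j by (simp add: natural_correlation_basis_def)
  have rng: "distr_fun M Z x \<in> {0..1}" for x
    using rd.cdf_nonneg rd.cdf_bounded_prob by (simp add: distr_fun_def)
  have c1: "continuous_on {0..1} (B j)" using nb by (simp add: natural_basis_function_def)
  have c2: "continuous_on UNIV (distr_fun M Z)"
      using Zc by (simp add: continuous_rv_def continuous_on_eq_continuous_at)
  have "continuous_on UNIV (\<lambda>x. B j (distr_fun M Z x))"
    by (rule continuous_on_compose2[OF c1 c2]) (use rng in blast)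
  then show "(\<lambda>x. B j (distr_fun M Z x)) \<in> borel_measurable borel"
    by (rule borel_measurable_continuous_onI)
  fix c y assume "distr_fun M Z (2*c - y) = 1 - distr_fun M Z y"
  moreover have "\<forall>u\<in>{0..1}. B j (1 - u) = (-1) ^ j * B j u"
    using nb by (simp add: natural_basis_function_def)
  ultimately show "B j (distr_fun M Z (2*c - y)) = (-1)^j * B j (distr_fun M Z y)"
    using rng by simp
qed

lemma snd_meas: assumes "(h::real\<Rightarrow>real) \<in> borel_measurable borel" shows "(\<lambda>p::real\<times>real. h (snd p)) \<in> borel_measurable borel"
  by (subst borel_prod[symmetric]) (use assms in measurable)

lemma fst_meas: assumes "(h::real\<Rightarrow>real) \<in> borel_measurable borel" shows "(\<lambda>p::real\<times>real. h (fst p)) \<in> borel_measurable borel"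
  by (subst borel_prod[symmetric]) (use assms in measurable)

theorem proposition4:
  fixes M :: "'a measure" and X Y :: "'a \<Rightarrow> real" and B :: "nat \<Rightarrow> real \<Rightarrow> real"
  assumes "prob_space M"
    and "continuous_rv M X" and "continuous_rv M Y"
    and "natural_correlation_basis B"
  shows "(h_symmetric M X Y \<longrightarrow> (\<forall>j\<ge>1. \<forall>k\<ge>1. odd k \<longrightarrow> basis_corr B j k M X Y = 0))
       \<and> (v_symmetric M X Y \<longrightarrow> (\<forall>j\<ge>1. \<forall>k\<ge>1. odd j \<longrightarrow> basis_corr B j k M X Y = 0))
       \<and> (radially_symmetric M X Y \<longrightarrow> (\<forall>j\<ge>1. \<forall>k\<ge>1. odd (j + k) \<longrightarrow> basis_corr B j k M X Y = 0))
       \<and> (jointly_symmetric M X Y \<longrightarrow>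
            (\<forall>j\<ge>1. \<forall>k\<ge>1. (odd j \<or> odd k) \<longrightarrow> basis_corr B j k M X Y = 0))"
proof -
  have Xm: "X \<in> borel_measurable M" using assms(2) by (simp add: continuous_rv_def)
  have Ym: "Y \<in> borel_measurable M" using assms(3) by (simp add: continuous_rv_def)
  note bX = basis_comp[OF assms(1) assms(2) assms(4)]
  note bY = basis_comp[OF assms(1) assms(3) assms(4)]
  have hc: "basis_corr B j k M X Y = 0" if hs: "h_symmetric M X Y" and j: "j \<ge> 1" and k: "k \<ge> 1" and ok: "odd k" for j k
  proof -
    obtain a where D: "distr M borel (\<lambda>\<omega>. (X \<omega>, Y \<omega> - a)) = distr M borel (\<lambda>\<omega>. (X \<omega>, a - Y \<omega>))"
      using hs by (auto simp: h_symmetric_def)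
    note H = H_h[OF Xm Ym D]
    have F: "distr_fun M Y (2*a - y) = 1 - distr_fun M Y y" for y
    proof (rule marg_cdf[OF assms(1) assms(3)])
      fix h :: "real \<Rightarrow> real" assume "h \<in> borel_measurable borel"
      from H[OF snd_meas[OF this]] show "(\<integral>\<omega>. h (Y \<omega>) \<partial>M) = (\<integral>\<omega>. h (2*a - Y \<omega>) \<partial>M)" by simp
    qed
    show ?thesis unfolding basis_corr_def
    proof (rule core[where f = "\<lambda>x. B j (distr_fun M X x)" and g = "\<lambda>y. B k (distr_fun M Y y)" and gX = "\<lambda>x. x" and gY = "\<lambda>y. 2*a - y" and ea = 1 and ec = "-1"])
      show "B k (distr_fun M Y (2 * a - y)) = - 1 * B k (distr_fun M Y y)" for y
        using bY(2)[OF k F] ok by simp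
    qed (use H bX(1)[OF j] bY(1)[OF k] in auto)
  qed
  have vc: "basis_corr B j k M X Y = 0" if hs: "v_symmetric M X Y" and j: "j \<ge> 1" and k: "k \<ge> 1" and oj: "odd j" for j k
  proof -
    obtain b where D: "distr M borel (\<lambda>\<omega>. (X \<omega> - b, Y \<omega>)) = distr M borel (\<lambda>\<omega>. (b - X \<omega>, Y \<omega>))"
      using hs by (auto simp: v_symmetric_def)
    note H = H_v[OF Xm Ym D]
    have F: "distr_fun M X (2*b - y) = 1 - distr_fun M X y" for y
    proof (rule marg_cdf[OF assms(1) assms(2)])
      fix h :: "real \<Rightarrow> real" assume "h \<in> borel_measurable borel"
      from H[OF fst_meas[OF this]] show "(\<integral>\<omega>. h (X \<omega>) \<partial>M) = (\<integral>\<omega>. h (2*b - X \<omega>) \<partial>M)" by simp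
    qed
    show ?thesis unfolding basis_corr_def
    proof (rule core[where f = "\<lambda>x. B j (distr_fun M X x)" and g = "\<lambda>y. B k (distr_fun M Y y)" and gX = "\<lambda>x. 2*b - x" and gY = "\<lambda>y. y" and ea = "-1" and ec = 1])
      show "B j (distr_fun M X (2 * b - y)) = - 1 * B j (distr_fun M X y)" for y
        using bX(2)[OF j F] oj by simp
    qed (use H bX(1)[OF j] bY(1)[OF k] in auto)
  qed
  have rc: "basis_corr B j k M X Y = 0" if hs: "radially_symmetric M X Y" and j: "j \<ge> 1" and k: "k \<ge> 1" and ojk: "odd (j + k)" for j k
  proof -
    obtain a b where D: "distr M borel (\<lambda>\<omega>. (X \<omega> - b, Y \<omega> - a)) = distr M borel (\<lambda>\<omega>. (b - X \<omega>, a - Y \<omega>))"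
      using hs by (auto simp: radially_symmetric_def)
    note H = H_r[OF Xm Ym D]
    have FX: "distr_fun M X (2*b - y) = 1 - distr_fun M X y" for y
    proof (rule marg_cdf[OF assms(1) assms(2)])
      fix h :: "real \<Rightarrow> real" assume "h \<in> borel_measurable borel"
      from H[OF fst_meas[OF this]] show "(\<integral>\<omega>. h (X \<omega>) \<partial>M) = (\<integral>\<omega>. h (2*b - X \<omega>) \<partial>M)" by simp
    qed
    have FY: "distr_fun M Y (2*a - y) = 1 - distr_fun M Y y" for y
    proof (rule marg_cdf[OF assms(1) assms(3)])
      fix h :: "real \<Rightarrow> real" assume "h \<in> borel_measurable borel"
      from H[OF snd_meas[OF this]] show "(\<integral>\<omega>. h (Y \<omega>) \<partial>M) = (\<integral>\<omega>. h (2*a - Y \<omega>) \<partial>M)" by simp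
    qed
    have pm: "(-1::real)^n = 1 \<or> (-1::real)^n = -1" for n :: nat by (cases "even n") auto
    have e: "(-1::real)^j * (-1)^k = -1" using ojk by (simp add: power_add[symmetric])
    show ?thesis unfolding basis_corr_def
    proof (rule core[where f = "\<lambda>x. B j (distr_fun M X x)" and g = "\<lambda>y. B k (distr_fun M Y y)" and gX = "\<lambda>x. 2*b - x" and gY = "\<lambda>y. 2*a - y" and ea = "(-1)^j" and ec = "(-1)^k"])
      show "B j (distr_fun M X (2 * b - y)) = (-1)^j * B j (distr_fun M X y)" for y
        using bX(2)[OF j FX] by simp
      show "B k (distr_fun M Y (2 * a - y)) = (-1)^k * B k (distr_fun M Y y)" for y
        using bY(2)[OF k FY] by simp
    qed (use H bX(1)[OF j] bY(1)[OF k] e pm[of j] pm[of k] in \<open>auto simp: neg_one_even_power neg_one_odd_power\<close>)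
  qed
  show ?thesis
    using hc vc rc by (auto simp: jointly_symmetric_def)
qed

end
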